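(* Let voters (and their proposals) be points of $[0,1]$, distributed according to the uniform distribution, with density $f(x)=1$ on $[0,1]$. Each voter prefers, between two proposals, the one closer to its own position. Consider one round of Triadic voting: three voters $X_1,X_2,X_3$ are drawn independently from the uniform distribution on $[0,1]$. Each voter votes for whichever of the other two proposals is closer to it, and the proposal receiving the most votes wins. Let $g_{\text{Triadic}}(x)$ denote the probability density of the winning proposal's position. Consider one round of Hot-or-Not voting: two candidate proposals $X, Y$ and one voter $Z$ are drawn independently from the uniform distribution on $[0,1]$. The voter $Z$ votes for whichever of $X,Y$ is closer to $Z$, and that proposal wins. Let $g_{\text{Hot-or-Not}}(x)$ denote the probability density of the winning proposal's position. Then, for $x\in[0,1]$, \[ g_{\text{Triadic}}(x)=6x(1-x), \qquad g_{\text{Hot-or-Not}}(x)=3x(1-x)+\tfrac12 . \] In particular, \[ g_{\text{Hot-or-Not}}(x)=\tfrac12 g_{\text{Triadic}}(x)+\tfrac12 f(x). \]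
   Context: This is a one-dimensional (single-peaked) model of proposals: each voter's opinion is a real number in $[0,1]$, and each voter's proposal is that same number. A voter at position $z$ prefers proposal $a$ to proposal $b$ if $|z-a|<|z-b|$. Ties occur with probability zero. *)

theory Defs
  imports "HOL-Probability.Probability"
begin

definition unif01 :: "real measure" where
  "unif01 = uniform_measure lborel {0..1}"

definition votes_for :: "(nat \<Rightarrow> real) \<Rightarrow> nat \<Rightarrow> nat" where
  "votes_for p j = card {i \<in> {0,1,2}. i \<noteq> j \<and>
      \<bar>p i - p j\<bar> < \<bar>p i - p (3 - i - j)\<bar>}"

text \<open>Winner of one Triadic round: the proposal with the most votes
  (ties, a null event, are broken arbitrarily in favour of the later index).\<close>
definition triadic_winner :: "real \<Rightarrow> real \<Rightarrow> real \<Rightarrow> real" where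
  "triadic_winner x1 x2 x3 =
     (let p = (\<lambda>i. if i = 0 then x1 else if i = 1 then x2 else x3) in
      if votes_for p 0 > votes_for p 1 \<and> votes_for p 0 > votes_for p 2 then x1
      else if votes_for p 1 > votes_for p 2 then x2 else x3)"

text \<open>Winner of one Hot-or-Not round: candidates x, y, voter z
  (ties, a null event, go to y).\<close>
definition hot_or_not_winner :: "real \<Rightarrow> real \<Rightarrow> real \<Rightarrow> real" where
  "hot_or_not_winner x y z = (if \<bar>z - x\<bar> < \<bar>z - y\<bar> then x else y)"

end

theory Submission
  imports Defs
begin


lemma U_eq: "unif01 = density lborel (indicator {0..1})"
  unfolding unif01_def uniform_measure_def by (simp add: divide_ennreal_def)

lemma sets_U[measurable_cong]: "sets unif01 = sets borel"
  by (simp add: U_eq)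

lemma space_U[simp]: "space unif01 = UNIV"
  by (simp add: U_eq)

lemma prob_U: "prob_space unif01"
  unfolding unif01_def by (rule prob_space_uniform_measure) auto

lemma int_U: "f \<in> borel_measurable borel \<Longrightarrow>
   (\<integral>\<^sup>+x. f x \<partial>unif01) = (\<integral>\<^sup>+x. f x * indicator {0..1} x \<partial>lborel)"
  by (simp add: U_eq nn_integral_density mult.commute)

lemma triple:
  assumes h[measurable]: "h \<in> borel_measurable (unif01 \<Otimes>\<^sub>M (unif01 \<Otimes>\<^sub>M unif01))"
  shows "(\<integral>\<^sup>+w. h w \<partial>(unif01 \<Otimes>\<^sub>M (unif01 \<Otimes>\<^sub>M unif01))) =
    (\<integral>\<^sup>+x. (\<integral>\<^sup>+y. (\<integral>\<^sup>+z. h (x,y,z) * indicator {0..1} z \<partial>lborel) * indicator {0..1} y \<partial>lborel) * indicator {0..1} x \<partial>lborel)"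
proof -
  interpret U: prob_space unif01 by (rule prob_U)
  interpret UU: prob_space "unif01 \<Otimes>\<^sub>M unif01" by (intro prob_space_pair prob_U)
  have "(\<integral>\<^sup>+w. h w \<partial>(unif01 \<Otimes>\<^sub>M (unif01 \<Otimes>\<^sub>M unif01))) =
     (\<integral>\<^sup>+x. (\<integral>\<^sup>+yz. h (x,yz) \<partial>(unif01 \<Otimes>\<^sub>M unif01)) \<partial>unif01)"
    by (rule UU.nn_integral_fst[symmetric]) measurable
  also have "\<dots> = (\<integral>\<^sup>+x. (\<integral>\<^sup>+y. (\<integral>\<^sup>+z. h (x,y,z) \<partial>unif01) \<partial>unif01) \<partial>unif01)"
    by (intro nn_integral_cong U.nn_integral_fst[symmetric]) measurable
  also have "\<dots> = (\<integral>\<^sup>+x. (\<integral>\<^sup>+y. (\<integral>\<^sup>+z. h (x,y,z) \<partial>unif01) \<partial>unif01) * indicator {0..1} x \<partial>lborel)"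
    by (rule int_U) measurable
  also have "\<dots> = (\<integral>\<^sup>+x. (\<integral>\<^sup>+y. (\<integral>\<^sup>+z. h (x,y,z) \<partial>unif01) * indicator {0..1} y \<partial>lborel) * indicator {0..1} x \<partial>lborel)"
    by (intro nn_integral_cong arg_cong2[where f="(*)"] refl int_U) measurable
  also have "\<dots> = (\<integral>\<^sup>+x. (\<integral>\<^sup>+y. (\<integral>\<^sup>+z. h (x,y,z) * indicator {0..1} z \<partial>lborel) * indicator {0..1} y \<partial>lborel) * indicator {0..1} x \<partial>lborel)"
    by (intro nn_integral_cong arg_cong2[where f="(*)"] refl int_U) measurable
  finally show ?thesis .
qed




lemma meas_hot[measurable]: "(\<lambda>(x, y, z). hot_or_not_winner x y z) \<in> borel_measurable (unif01 \<Otimes>\<^sub>M (unif01 \<Otimes>\<^sub>M unif01))"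
  unfolding hot_or_not_winner_def by measurable

definition qh :: "real \<Rightarrow> real \<Rightarrow> real \<Rightarrow> real" where
  "qh a x y = (if x \<le> a \<and> y \<le> a then 1 else if x \<le> a \<or> y \<le> a then (x+y)/2 else 0)"

lemma hot_z:
  assumes x: "0 \<le> x" "x \<le> 1" and y: "0 \<le> y" "y \<le> 1"
  shows "(\<integral>\<^sup>+z. indicator {..a} (hot_or_not_winner x y z) * indicator {0..1} z \<partial>lborel) = ennreal (qh a x y)"
proof -
  consider "x \<le> a \<and> y \<le> a" | "\<not> x \<le> a \<and> \<not> y \<le> a" | "x \<le> a \<and> \<not> y \<le> a" | "\<not> x \<le> a \<and> y \<le> a" by blast
  then show ?thesis
  proof cases
    case 1
    then have eq: "\<And>z. indicator {..a} (hot_or_not_winner x y z) * indicator {0..1} z = (indicator {0..1} z :: ennreal)"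
      by (auto simp: hot_or_not_winner_def indicator_def)
    then show ?thesis using 1 by (simp only: eq) (simp add: qh_def)
  next
    case 2
    then have eq: "\<And>z. indicator {..a} (hot_or_not_winner x y z) * indicator {0..1} z = (0 :: ennreal)"
      by (auto simp: hot_or_not_winner_def indicator_def)
    then show ?thesis using 2 by (simp only: eq) (simp add: qh_def)
  next
    case 3
    then have eq: "\<And>z. indicator {..a} (hot_or_not_winner x y z) * indicator {0..1} z = (indicator {0..<(x+y)/2} z :: ennreal)"
      using x y by (auto simp: hot_or_not_winner_def indicator_def abs_if)
    then show ?thesis using 3 x y by (simp only: eq) (simp add: qh_def)
  next
    case 4
    then have eq: "\<And>z. indicator {..a} (hot_or_not_winner x y z) * indicator {0..1} z = (indicator {0..(x+y)/2} z :: ennreal)"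
      using x y by (auto simp: hot_or_not_winner_def indicator_def abs_if)
    then show ?thesis using 4 x y by (simp only: eq) (simp add: qh_def)
  qed
qed




lemma ftc:
  fixes p F :: "real \<Rightarrow> real"
  assumes "c \<le> d" "\<And>y. y \<in> {c..d} \<Longrightarrow> (F has_real_derivative p y) (at y)"
    "\<And>y. y \<in> {c..d} \<Longrightarrow> 0 \<le> p y" "p \<in> borel_measurable borel"
  shows "(\<integral>\<^sup>+y. ennreal (p y) * indicator {c..d} y \<partial>lborel) = ennreal (F d - F c)"
  using nn_integral_FTC_Icc[OF assms(4) assms(2) assms(3) assms(1)] by simp

definition rh :: "real \<Rightarrow> real \<Rightarrow> real" where
  "rh a x = (if x \<le> a then a + x*(1-a)/2 + (1-a^2)/4 else x*a/2 + a^2/4)"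

lemma hot_y:
  assumes a: "0 \<le> a" "a \<le> 1" and x: "0 \<le> x" "x \<le> 1"
  shows "(\<integral>\<^sup>+y. ennreal (qh a x y) * indicator {0..1} y \<partial>lborel) = ennreal (rh a x)"
proof (cases "x \<le> a")
  case True
  have "(\<integral>\<^sup>+y. ennreal (qh a x y) * indicator {0..1} y \<partial>lborel) =
     (\<integral>\<^sup>+y. indicator {0..a} y + ennreal ((x+y)/2) * indicator {a..1} y \<partial>lborel)"
    by (intro nn_integral_cong_AE eventually_mono[OF AE_lborel_singleton[of a]])
       (use True a in \<open>auto simp: qh_def indicator_def\<close>)
  also have "\<dots> = (\<integral>\<^sup>+y. indicator {0..a} y \<partial>lborel) + (\<integral>\<^sup>+y. ennreal ((x+y)/2) * indicator {a..1} y \<partial>lborel)"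
    by (rule nn_integral_add) auto
  also have "(\<integral>\<^sup>+y. ennreal ((x+y)/2) * indicator {a..1} y \<partial>lborel) =
      ennreal ((\<lambda>y. (x*y + y^2/2)/2) 1 - (\<lambda>y. (x*y + y^2/2)/2) a)"
    by (rule ftc) (use a x in \<open>auto intro!: derivative_eq_intros simp: field_simps\<close>)
  also have "(\<integral>\<^sup>+y. indicator {0..a} y \<partial>lborel) = ennreal a" using a by simp
  also have "ennreal a + ennreal ((\<lambda>y. (x*y + y^2/2)/2) 1 - (\<lambda>y. (x*y + y^2/2)/2) a) = ennreal (rh a x)"
  proof -
    have "a*a \<le> 1" "a*x \<le> x" "x*a \<le> x" using a x by (auto simp: mult_le_one mult_left_le_one_le mult_left_le)
    then show ?thesis
    using True a x by (subst ennreal_plus[symmetric]) (auto simp: rh_def field_simps power2_eq_square intro!: arg_cong[where f=ennreal] mult_mono)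
  qed
  finally show ?thesis .
next
  case False
  have "(\<integral>\<^sup>+y. ennreal (qh a x y) * indicator {0..1} y \<partial>lborel) =
     (\<integral>\<^sup>+y. ennreal ((x+y)/2) * indicator {0..a} y \<partial>lborel)"
    by (intro nn_integral_cong) (use False a in \<open>auto simp: qh_def indicator_def\<close>)
  also have "\<dots> = ennreal ((\<lambda>y. (x*y + y^2/2)/2) a - (\<lambda>y. (x*y + y^2/2)/2) 0)"
    by (rule ftc) (use a x in \<open>auto intro!: derivative_eq_intros simp: field_simps\<close>)
  also have "\<dots> = ennreal (rh a x)"
    using False by (auto simp: rh_def field_simps power2_eq_square)
  finally show ?thesis .
qed

definition Gh :: "real \<Rightarrow> real" where "Gh a = 3*a^2/2 - a^3 + a/2"

lemma hot_x:
  assumes a: "0 \<le> a" "a \<le> 1"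
  shows "(\<integral>\<^sup>+x. ennreal (rh a x) * indicator {0..1} x \<partial>lborel) = ennreal (Gh a)"
proof -
  have "(\<integral>\<^sup>+x. ennreal (rh a x) * indicator {0..1} x \<partial>lborel) =
     (\<integral>\<^sup>+x. ennreal (a + x*(1-a)/2 + (1-a^2)/4) * indicator {0..a} x + ennreal (x*a/2 + a^2/4) * indicator {a..1} x \<partial>lborel)"
    by (intro nn_integral_cong_AE eventually_mono[OF AE_lborel_singleton[of a]])
       (use a in \<open>auto simp: rh_def indicator_def\<close>)
  also have "\<dots> = (\<integral>\<^sup>+x. ennreal (a + x*(1-a)/2 + (1-a^2)/4) * indicator {0..a} x \<partial>lborel) + (\<integral>\<^sup>+x. ennreal (x*a/2 + a^2/4) * indicator {a..1} x \<partial>lborel)"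
    by (rule nn_integral_add) auto
  also have "(\<integral>\<^sup>+x. ennreal (a + x*(1-a)/2 + (1-a^2)/4) * indicator {0..a} x \<partial>lborel) =
      ennreal ((\<lambda>x. a*x + x^2*(1-a)/4 + (1-a^2)*x/4) a - (\<lambda>x. a*x + x^2*(1-a)/4 + (1-a^2)*x/4) 0)"
  proof (rule ftc)
    have "a*a \<le> 1" using a by (auto simp: mult_le_one)
    moreover have "\<And>x. 0 \<le> x \<Longrightarrow> x*a \<le> x" using a by (simp add: mult_left_le)
    ultimately show "\<And>y. y \<in> {0..a} \<Longrightarrow> 0 \<le> a + y*(1-a)/2 + (1-a^2)/4"
    proof -
      fix y assume y: "y \<in> {0..a}"
      have "y * a \<le> y" using y a by (simp add: mult_left_le)
      moreover have "a*a \<le> 1" using a by (auto simp: mult_le_one)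
      ultimately show "0 \<le> a + y*(1-a)/2 + (1-a^2)/4" using y a by (simp add: field_simps power2_eq_square)
    qed
  qed (use a in \<open>auto intro!: derivative_eq_intros simp: field_simps power2_eq_square\<close>)
  also have "(\<integral>\<^sup>+x. ennreal (x*a/2 + a^2/4) * indicator {a..1} x \<partial>lborel) =
      ennreal ((\<lambda>x. x^2*a/4 + a^2*x/4) 1 - (\<lambda>x. x^2*a/4 + a^2*x/4) a)"
    by (rule ftc) (use a in \<open>auto intro!: derivative_eq_intros simp: field_simps power2_eq_square\<close>)
  also have "ennreal ((\<lambda>x. a*x + x^2*(1-a)/4 + (1-a^2)*x/4) a - (\<lambda>x. a*x + x^2*(1-a)/4 + (1-a^2)*x/4) 0)
      + ennreal ((\<lambda>x. x^2*a/4 + a^2*x/4) 1 - (\<lambda>x. x^2*a/4 + a^2*x/4) a) = ennreal (Gh a)"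
  proof -
    have n1: "0 \<le> a*a + a^2*(1-a)/4 + (1-a^2)*a/4" using a by (auto intro!: add_nonneg_nonneg mult_nonneg_nonneg simp: power2_eq_square mult_le_one)
    have "a*a \<le> a" using a by (simp add: mult_left_le)
    moreover have "a*a*a \<le> a*a" using a by (simp add: mult_left_le)
    ultimately have n2: "0 \<le> a/4 + a^2/4 - (a^2*a/4 + a^2*a/4)" using a
      by (simp add: power2_eq_square field_simps)
    show ?thesis using a n1 n2 by (subst ennreal_plus[symmetric]) (auto simp: Gh_def field_simps power2_eq_square power3_eq_cube intro!: arg_cong[where f=ennreal])
  qed
  finally show ?thesis .
qed




abbreviation "MM \<equiv> unif01 \<Otimes>\<^sub>M (unif01 \<Otimes>\<^sub>M unif01)"

lemma prob_MM: "prob_space MM" by (intro prob_space_pair prob_U)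

lemma mult_ind_cong:
  "(\<And>y. y \<in> S \<Longrightarrow> f y = g y) \<Longrightarrow> (f y :: ennreal) * indicator S y = g y * indicator S y"
  by (cases "y \<in> S") auto

lemma cdf_as_int:
  fixes X :: "real \<times> real \<times> real \<Rightarrow> real"
  assumes [measurable]: "X \<in> borel_measurable MM"
  shows "emeasure MM {w\<in>space MM. X w \<le> a} = (\<integral>\<^sup>+w. indicator {..a} (X w) \<partial>MM)"
proof -
  have "emeasure MM {w\<in>space MM. X w \<le> a} = (\<integral>\<^sup>+w. indicator {w\<in>space MM. X w \<le> a} w \<partial>MM)"
  proof -
    have "{w\<in>space MM. X w \<le> a} = X -` {..a} \<inter> space MM" by auto
    also have "\<dots> \<in> sets MM" by (rule measurable_sets[OF assms]) simp
    finally have "{w\<in>space MM. X w \<le> a} \<in> sets MM" .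
    then show ?thesis by simp
  qed
  also have "\<dots> = (\<integral>\<^sup>+w. indicator {..a} (X w) \<partial>MM)"
    by (intro nn_integral_cong) (auto simp: indicator_def)
  finally show ?thesis .
qed

lemma hot_cdf01:
  assumes a: "0 \<le> a" "a \<le> 1"
  shows "emeasure MM {w\<in>space MM. (\<lambda>(x, y, z). hot_or_not_winner x y z) w \<le> a} = ennreal (Gh a)"
proof -
  have "emeasure MM {w\<in>space MM. (\<lambda>(x, y, z). hot_or_not_winner x y z) w \<le> a}
     = (\<integral>\<^sup>+w. indicator {..a} ((\<lambda>(x, y, z). hot_or_not_winner x y z) w) \<partial>MM)"
    by (rule cdf_as_int) measurable
  also have "\<dots> = (\<integral>\<^sup>+x. (\<integral>\<^sup>+y. (\<integral>\<^sup>+z. indicator {..a} (hot_or_not_winner x y z) * indicator {0..1} z \<partial>lborel) * indicator {0..1} y \<partial>lborel) * indicator {0..1} x \<partial>lborel)"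
    by (subst triple) auto
  also have "\<dots> = (\<integral>\<^sup>+x. (\<integral>\<^sup>+y. ennreal (qh a x y) * indicator {0..1} y \<partial>lborel) * indicator {0..1} x \<partial>lborel)"
    by (intro nn_integral_cong mult_ind_cong) (auto simp: hot_z)
  also have "\<dots> = (\<integral>\<^sup>+x. ennreal (rh a x) * indicator {0..1} x \<partial>lborel)"
    by (intro nn_integral_cong mult_ind_cong) (auto simp: hot_y a)
  also have "\<dots> = ennreal (Gh a)" by (rule hot_x[OF a])
  finally show ?thesis .
qed




lemma distr_from_cdf01:
  fixes X :: "real \<times> real \<times> real \<Rightarrow> real" and p G :: "real \<Rightarrow> real"
  assumes X[measurable]: "X \<in> borel_measurable MM"
    and p[measurable]: "p \<in> borel_measurable borel"
    and pnn: "\<And>x. x \<in> {0..1} \<Longrightarrow> 0 \<le> p x"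
    and D: "\<And>x. x \<in> {0..1} \<Longrightarrow> (G has_real_derivative p x) (at x)"
    and G0: "G 0 = 0" and G1: "G 1 = 1"
    and cdf: "\<And>a. 0 \<le> a \<Longrightarrow> a \<le> 1 \<Longrightarrow> emeasure MM {w\<in>space MM. X w \<le> a} = ennreal (G a)"
  shows "distributed MM lborel X (\<lambda>x. ennreal (indicator {0..1} x * p x))"
proof (rule distributedI_borel_atMost[where g = "\<lambda>a. G (max 0 (min 1 a))"])
  show "X \<in> borel_measurable MM" by (rule X)
  show "(\<lambda>x. indicator {0..1} x * p x) \<in> borel_measurable borel" by measurable
  show "AE x in lborel. 0 \<le> indicator {0..1} x * p x"
    using pnn by (auto simp: indicator_def)
  fix a :: real
  show "(\<integral>\<^sup>+x. ennreal (indicator {0..1} x * p x * indicator {..a} x) \<partial>lborel) = ennreal (G (max 0 (min 1 a)))"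
  proof (cases "a < 0")
    case True
    have "(\<integral>\<^sup>+x. ennreal (indicator {0..1} x * p x * indicator {..a} x) \<partial>lborel) = (\<integral>\<^sup>+(x::real). 0 \<partial>lborel)"
      using True by (intro nn_integral_cong) (auto simp: indicator_def)
    then show ?thesis using True G0 by simp
  next
    case False
    define s where "s = min 1 a"
    have s: "0 \<le> s" "s \<le> 1" using False by (auto simp: s_def)
    have "(\<integral>\<^sup>+x. ennreal (indicator {0..1} x * p x * indicator {..a} x) \<partial>lborel)
        = (\<integral>\<^sup>+x. ennreal (p x) * indicator {0..s} x \<partial>lborel)"
      by (intro nn_integral_cong) (auto simp: indicator_def s_def)
    also have "\<dots> = ennreal (G s - G 0)"
      by (rule ftc) (use s pnn D in auto)
    finally show ?thesis using False G0 by (simp add: s_def)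
  qed
next
  interpret P: prob_space MM by (rule prob_MM)
  fix a :: real
  show "emeasure MM {w\<in>space MM. X w \<le> a} = ennreal (G (max 0 (min 1 a)))"
  proof -
    consider "a < 0" | "0 \<le> a \<and> a \<le> 1" | "1 < a" by linarith
    then show ?thesis
    proof cases
      case 1
      have "emeasure MM {w\<in>space MM. X w \<le> a} \<le> emeasure MM {w\<in>space MM. X w \<le> 0}"
        using 1 by (intro emeasure_mono) auto
      also have "\<dots> = 0" using cdf[of 0] G0 by simp
      finally show ?thesis using 1 G0 by simp
    next
      case 2 then show ?thesis using cdf by simp
    next
      case 3
      have "1 = emeasure MM {w\<in>space MM. X w \<le> 1}" using cdf[of 1] G1 by simp
      also have "\<dots> \<le> emeasure MM {w\<in>space MM. X w \<le> a}"
        using 3 by (intro emeasure_mono) auto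
      finally have "1 \<le> emeasure MM {w\<in>space MM. X w \<le> a}" .
      moreover have "emeasure MM {w\<in>space MM. X w \<le> a} \<le> 1" by (rule P.emeasure_le_1)
      ultimately show ?thesis using 3 G1 by simp
    qed
  qed
qed

lemma hot_distr: "distributed MM lborel (\<lambda>(x, y, z). hot_or_not_winner x y z)
           (\<lambda>x. ennreal (indicator {0..1} x * (3 * x * (1 - x) + 1 / 2)))"
proof (rule distr_from_cdf01[where G = Gh])
  show "\<And>x::real. x \<in> {0..1} \<Longrightarrow> 0 \<le> 3 * x * (1 - x) + 1 / 2" by auto
  show "\<And>x. x \<in> {0..1} \<Longrightarrow> (Gh has_real_derivative 3 * x * (1 - x) + 1 / 2) (at x)"
    unfolding Gh_def[abs_def] by (auto intro!: derivative_eq_intros simp: field_simps power2_eq_square)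
qed (auto simp: Gh_def hot_cdf01)




definition cv :: "real \<Rightarrow> real \<Rightarrow> real \<Rightarrow> real" where
  "cv u v w = (if \<bar>u - v\<bar> < \<bar>u - w\<bar> then 1 else 0)"

lemma cv_meas[measurable]: 
  assumes [measurable]: "f \<in> borel_measurable M" "g \<in> borel_measurable M" "h \<in> borel_measurable M"
  shows "(\<lambda>x. cv (f x) (g x) (h x)) \<in> borel_measurable M"
  unfolding cv_def by measurable

lemma card2: "card ((if c1 then {a} else {}) \<union> (if c2 then {b} else {})) = (if c1 then 1 else 0) + (if c2 then 1 else (0::nat))"
  if "a \<noteq> b" for a b :: nat
  using that by auto

lemma votes0: "real (votes_for p 0) = cv (p 1) (p 0) (p 2) + cv (p 2) (p 0) (p 1)"
proof -
  have "{i \<in> {0,1,2}. i \<noteq> 0 \<and> \<bar>p i - p 0\<bar> < \<bar>p i - p (3 - i - 0)\<bar>} =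
    (if \<bar>p 1 - p 0\<bar> < \<bar>p 1 - p 2\<bar> then {1} else {}) \<union> (if \<bar>p 2 - p 0\<bar> < \<bar>p 2 - p 1\<bar> then {2} else {})"
    apply (auto simp: numeral_eq_Suc)
    apply ((case_tac x; simp)+)?
    done
  then show ?thesis unfolding votes_for_def by (simp only: card2) (simp add: cv_def)
qed

lemma votes1: "real (votes_for p 1) = cv (p 0) (p 1) (p 2) + cv (p 2) (p 1) (p 0)"
proof -
  have "{i \<in> {0,1,2}. i \<noteq> 1 \<and> \<bar>p i - p 1\<bar> < \<bar>p i - p (3 - i - 1)\<bar>} =
    (if \<bar>p 0 - p 1\<bar> < \<bar>p 0 - p 2\<bar> then {0} else {}) \<union> (if \<bar>p 2 - p 1\<bar> < \<bar>p 2 - p 0\<bar> then {2} else {})"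
    apply (auto simp: numeral_eq_Suc)
    apply ((case_tac x; simp)+)?
    done
  then show ?thesis unfolding votes_for_def by (simp only: card2) (simp add: cv_def)
qed

lemma votes2: "real (votes_for p 2) = cv (p 0) (p 2) (p 1) + cv (p 1) (p 2) (p 0)"
proof -
  have "{i \<in> {0,1,2}. i \<noteq> 2 \<and> \<bar>p i - p 2\<bar> < \<bar>p i - p (3 - i - 2)\<bar>} =
    (if \<bar>p 0 - p 2\<bar> < \<bar>p 0 - p 1\<bar> then {0} else {}) \<union> (if \<bar>p 1 - p 2\<bar> < \<bar>p 1 - p 0\<bar> then {1} else {})"
    apply (auto simp: numeral_eq_Suc)
    apply ((case_tac x; simp)+)?
    done
  then show ?thesis unfolding votes_for_def by (simp only: card2) (simp add: cv_def)
qed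

lemma tri_eq: "triadic_winner x1 x2 x3 =
  (let v0 = cv x2 x1 x3 + cv x3 x1 x2; v1 = cv x1 x2 x3 + cv x3 x2 x1; v2 = cv x1 x3 x2 + cv x2 x3 x1 in
   if v0 > v1 \<and> v0 > v2 then x1 else if v1 > v2 then x2 else x3)"
proof -
  define p where "p = (\<lambda>i::nat. if i = 0 then x1 else if i = 1 then x2 else x3)"
  have "votes_for p 0 > votes_for p 1 \<longleftrightarrow> real (votes_for p 0) > real (votes_for p 1)"
       "votes_for p 0 > votes_for p 2 \<longleftrightarrow> real (votes_for p 0) > real (votes_for p 2)"
       "votes_for p 1 > votes_for p 2 \<longleftrightarrow> real (votes_for p 1) > real (votes_for p 2)" by simp_all
  then show ?thesis unfolding triadic_winner_def p_def[symmetric] Let_def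
    by (simp only: votes0 votes1 votes2) (simp add: p_def)
qed

lemma meas_tri[measurable]: "(\<lambda>(x1, x2, x3). triadic_winner x1 x2 x3) \<in> borel_measurable MM"
  unfolding tri_eq Let_def by measurable




definition med :: "real \<Rightarrow> real \<Rightarrow> real \<Rightarrow> real" where
  "med x y z = max (min x y) (min (max x y) z)"

lemma tri_med:
  assumes "x \<noteq> y" "y \<noteq> z" "x \<noteq> z"
  shows "triadic_winner x y z = med x y z"
proof -
  consider "x < y" "y < z" | "x < z" "z < y" | "y < x" "x < z" | "y < z" "z < x" | "z < x" "x < y" | "z < y" "y < x"
    using assms by (metis linorder_neqE_linordered_idom)
  then show ?thesis
    by cases (auto simp: tri_eq cv_def Let_def med_def)
qed

definition qt :: "real \<Rightarrow> real \<Rightarrow> real \<Rightarrow> real" where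
  "qt a x y = (if x \<le> a \<and> y \<le> a then 1 else if x \<le> a \<or> y \<le> a then a else 0)"

lemma tri_z:
  assumes a: "0 \<le> a" "a \<le> 1" and xy: "x \<noteq> y"
  shows "(\<integral>\<^sup>+z. indicator {..a} (triadic_winner x y z) * indicator {0..1} z \<partial>lborel) = ennreal (qt a x y)"
proof -
  have "(\<integral>\<^sup>+z. indicator {..a} (triadic_winner x y z) * indicator {0..1} z \<partial>lborel) =
     (\<integral>\<^sup>+z. indicator {..a} (med x y z) * indicator {0..1} z \<partial>lborel)"
    by (intro nn_integral_cong_AE eventually_mono[OF eventually_conj[OF AE_lborel_singleton[of x] AE_lborel_singleton[of y]]])
       (use xy in \<open>auto simp: tri_med\<close>)
  also have "\<dots> = ennreal (qt a x y)"
  proof -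
    consider "x \<le> a \<and> y \<le> a" | "\<not> x \<le> a \<and> \<not> y \<le> a" | "(x \<le> a \<or> y \<le> a) \<and> \<not> (x \<le> a \<and> y \<le> a)" by blast
    then show ?thesis
    proof cases
      case 1
      then have eq: "\<And>z. indicator {..a} (med x y z) * indicator {0..1} z = (indicator {0..1} z :: ennreal)"
        by (auto simp: med_def indicator_def)
      then show ?thesis using 1 by (simp only: eq) (simp add: qt_def)
    next
      case 2
      then have eq: "\<And>z. indicator {..a} (med x y z) * indicator {0..1} z = (0 :: ennreal)"
        by (auto simp: med_def indicator_def)
      then show ?thesis using 2 by (simp only: eq) (simp add: qt_def)
    next
      case 3
      then have eq: "\<And>z. indicator {..a} (med x y z) * indicator {0..1} z = (indicator {0..a} z :: ennreal)"
        using a by (auto simp: med_def indicator_def)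
      then show ?thesis using 3 a by (simp only: eq) (auto simp: qt_def)
    qed
  qed
  finally show ?thesis .
qed

definition rt :: "real \<Rightarrow> real \<Rightarrow> real" where
  "rt a x = (if x \<le> a then a + a*(1-a) else a^2)"

lemma tri_y:
  assumes a: "0 \<le> a" "a \<le> 1"
  shows "(\<integral>\<^sup>+y. ennreal (qt a x y) * indicator {0..1} y \<partial>lborel) = ennreal (rt a x)"
proof (cases "x \<le> a")
  case True
  have "(\<integral>\<^sup>+y. ennreal (qt a x y) * indicator {0..1} y \<partial>lborel) =
     (\<integral>\<^sup>+y. ennreal 1 * indicator {0..a} y + ennreal a * indicator {a..1} y \<partial>lborel)"
    by (intro nn_integral_cong_AE eventually_mono[OF AE_lborel_singleton[of a]])
       (use True a in \<open>auto simp: qt_def indicator_def\<close>)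
  also have "\<dots> = (\<integral>\<^sup>+y. ennreal 1 * indicator {0..a} y \<partial>lborel) + (\<integral>\<^sup>+y. ennreal a * indicator {a..1} y \<partial>lborel)"
    by (rule nn_integral_add) auto
  also have "(\<integral>\<^sup>+y. ennreal 1 * indicator {0..a} y \<partial>lborel) = ennreal ((\<lambda>y. y) a - (\<lambda>y. y) 0)"
    by (rule ftc) (use a in \<open>auto intro!: derivative_eq_intros\<close>)
  also have "(\<integral>\<^sup>+y. ennreal a * indicator {a..1} y \<partial>lborel) = ennreal ((\<lambda>y. a*y) 1 - (\<lambda>y. a*y) a)"
    by (rule ftc) (use a in \<open>auto intro!: derivative_eq_intros\<close>)
  also have "ennreal ((\<lambda>y. y) a - (\<lambda>y. y) 0) + ennreal ((\<lambda>y. a*y) 1 - (\<lambda>y. a*y) a) = ennreal (rt a x)"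
  proof -
    have "a*a \<le> a" using a by (simp add: mult_left_le)
    then show ?thesis using True a by (subst ennreal_plus[symmetric]) (auto simp: rt_def field_simps)
  qed
  finally show ?thesis .
next
  case False
  have "(\<integral>\<^sup>+y. ennreal (qt a x y) * indicator {0..1} y \<partial>lborel) =
     (\<integral>\<^sup>+y. ennreal a * indicator {0..a} y \<partial>lborel)"
    by (intro nn_integral_cong) (use False a in \<open>auto simp: qt_def indicator_def\<close>)
  also have "\<dots> = ennreal ((\<lambda>y. a*y) a - (\<lambda>y. a*y) 0)"
    by (rule ftc) (use a in \<open>auto intro!: derivative_eq_intros\<close>)
  also have "\<dots> = ennreal (rt a x)"
    using False by (auto simp: rt_def power2_eq_square)
  finally show ?thesis .
qed

definition Gt :: "real \<Rightarrow> real" where "Gt a = 3*a^2 - 2*a^3"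

lemma tri_x:
  assumes a: "0 \<le> a" "a \<le> 1"
  shows "(\<integral>\<^sup>+x. ennreal (rt a x) * indicator {0..1} x \<partial>lborel) = ennreal (Gt a)"
proof -
  have "(\<integral>\<^sup>+x. ennreal (rt a x) * indicator {0..1} x \<partial>lborel) =
     (\<integral>\<^sup>+x. ennreal (a + a*(1-a)) * indicator {0..a} x + ennreal (a^2) * indicator {a..1} x \<partial>lborel)"
    by (intro nn_integral_cong_AE eventually_mono[OF AE_lborel_singleton[of a]])
       (use a in \<open>auto simp: rt_def indicator_def\<close>)
  also have "\<dots> = (\<integral>\<^sup>+x. ennreal (a + a*(1-a)) * indicator {0..a} x \<partial>lborel) + (\<integral>\<^sup>+x. ennreal (a^2) * indicator {a..1} x \<partial>lborel)"
    by (rule nn_integral_add) auto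
  also have "(\<integral>\<^sup>+x. ennreal (a + a*(1-a)) * indicator {0..a} x \<partial>lborel) =
      ennreal ((\<lambda>x. (a + a*(1-a))*x) a - (\<lambda>x. (a + a*(1-a))*x) 0)"
    by (rule ftc) (use a in \<open>auto intro!: derivative_eq_intros\<close>)
  also have "(\<integral>\<^sup>+x. ennreal (a^2) * indicator {a..1} x \<partial>lborel) =
      ennreal ((\<lambda>x. a^2*x) 1 - (\<lambda>x. a^2*x) a)"
    by (rule ftc) (use a in \<open>auto intro!: derivative_eq_intros\<close>)
  also have "ennreal ((\<lambda>x. (a + a*(1-a))*x) a - (\<lambda>x. (a + a*(1-a))*x) 0)
      + ennreal ((\<lambda>x. a^2*x) 1 - (\<lambda>x. a^2*x) a) = ennreal (Gt a)"
  proof -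
    have "a*a \<le> 1" using a by (simp add: mult_le_one)
    moreover have "a*a*a \<le> a*a" using a by (simp add: mult_left_le)
    moreover have "0 \<le> a*a" by simp
    moreover have "a*a*a \<le> 2*(a*a)" using \<open>a*a*a \<le> a*a\<close> \<open>0 \<le> a*a\<close> by linarith
    ultimately show ?thesis using a by (subst ennreal_plus[symmetric]) (auto simp: Gt_def field_simps power2_eq_square power3_eq_cube intro!: arg_cong[where f=ennreal])
  qed
  finally show ?thesis .
qed

lemma tri_cdf01:
  assumes a: "0 \<le> a" "a \<le> 1"
  shows "emeasure MM {w\<in>space MM. (\<lambda>(x1, x2, x3). triadic_winner x1 x2 x3) w \<le> a} = ennreal (Gt a)"
proof -
  have "emeasure MM {w\<in>space MM. (\<lambda>(x1, x2, x3). triadic_winner x1 x2 x3) w \<le> a}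
     = (\<integral>\<^sup>+w. indicator {..a} ((\<lambda>(x1, x2, x3). triadic_winner x1 x2 x3) w) \<partial>MM)"
    by (rule cdf_as_int) measurable
  also have "\<dots> = (\<integral>\<^sup>+x. (\<integral>\<^sup>+y. (\<integral>\<^sup>+z. indicator {..a} (triadic_winner x y z) * indicator {0..1} z \<partial>lborel) * indicator {0..1} y \<partial>lborel) * indicator {0..1} x \<partial>lborel)"
    by (subst triple) auto
  also have "\<dots> = (\<integral>\<^sup>+x. (\<integral>\<^sup>+y. ennreal (qt a x y) * indicator {0..1} y \<partial>lborel) * indicator {0..1} x \<partial>lborel)"
  proof (rule nn_integral_cong)
    fix x :: real
    have "(\<integral>\<^sup>+y. (\<integral>\<^sup>+z. indicator {..a} (triadic_winner x y z) * indicator {0..1} z \<partial>lborel) * indicator {0..1} y \<partial>lborel)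
       = (\<integral>\<^sup>+y. ennreal (qt a x y) * indicator {0..1} y \<partial>lborel)"
      by (intro nn_integral_cong_AE eventually_mono[OF AE_lborel_singleton[of x]])
         (auto simp: tri_z a)
    then show "(\<integral>\<^sup>+y. (\<integral>\<^sup>+z. indicator {..a} (triadic_winner x y z) * indicator {0..1} z \<partial>lborel) * indicator {0..1} y \<partial>lborel) * indicator {0..1} x
       = (\<integral>\<^sup>+y. ennreal (qt a x y) * indicator {0..1} y \<partial>lborel) * indicator {0..1} x" by simp
  qed
  also have "\<dots> = (\<integral>\<^sup>+x. ennreal (rt a x) * indicator {0..1} x \<partial>lborel)"
    by (intro nn_integral_cong mult_ind_cong) (auto simp: tri_y a)
  also have "\<dots> = ennreal (Gt a)" by (rule tri_x[OF a])
  finally show ?thesis .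
qed

lemma tri_distr: "distributed MM lborel (\<lambda>(x1, x2, x3). triadic_winner x1 x2 x3)
           (\<lambda>x. ennreal (indicator {0..1} x * (6 * x * (1 - x))))"
proof (rule distr_from_cdf01[where G = Gt])
  show "\<And>x::real. x \<in> {0..1} \<Longrightarrow> 0 \<le> 6 * x * (1 - x)" by auto
  show "\<And>x. x \<in> {0..1} \<Longrightarrow> (Gt has_real_derivative 6 * x * (1 - x)) (at x)"
    unfolding Gt_def[abs_def] by (auto intro!: derivative_eq_intros simp: field_simps power2_eq_square)
qed (auto simp: Gt_def tri_cdf01)


theorem theorem1:
  shows "distributed (unif01 \<Otimes>\<^sub>M (unif01 \<Otimes>\<^sub>M unif01)) lborel
           (\<lambda>(x1, x2, x3). triadic_winner x1 x2 x3)
           (\<lambda>x. ennreal (indicator {0..1} x * (6 * x * (1 - x))))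
       \<and> distributed (unif01 \<Otimes>\<^sub>M (unif01 \<Otimes>\<^sub>M unif01)) lborel
           (\<lambda>(x, y, z). hot_or_not_winner x y z)
           (\<lambda>x. ennreal (indicator {0..1} x * (3 * x * (1 - x) + 1 / 2)))
       \<and> (\<forall>x::real \<in> {0..1}. 3 * x * (1 - x) + 1 / 2
                = 1 / 2 * (6 * x * (1 - x)) + 1 / 2 * 1)"
  using tri_distr hot_distr by (auto simp: algebra_simps)

end
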